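(* Let $|\varphi_0\rangle,|\varphi_1\rangle,|\varphi_2\rangle,|\varphi_3\rangle,|\varphi_4\rangle$ be vectors in a complex Hilbert space, each of norm at most $1$, and let $\epsilon\ge0$ with $\big|\||\varphi_0\rangle\|-1\big|\le\epsilon$, $\big|\||\varphi_4\rangle\|-1\big|\le\epsilon$ and $\||\varphi_0\rangle+|\varphi_4\rangle\|\le\epsilon$. Then $$\||\varphi_0\rangle+|\varphi_1\rangle\|^2+\||\varphi_1\rangle+|\varphi_2\rangle\|^2+\||\varphi_2\rangle+|\varphi_3\rangle\|^2+\||\varphi_3\rangle+|\varphi_4\rangle\|^2\le16\cos^2(\pi/8)+6\epsilon .$$
   Context: Norms are Euclidean norms on a complex inner product space. *)

theory Defs
  imports "HOL-Analysis.Analysis"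
begin

end

theory Submission
  imports Defs
begin

lemma nsq_add: "(norm (x + y :: 'a::real_inner))\<^sup>2 = (norm x)\<^sup>2 + (norm y)\<^sup>2 + 2 * inner x y"
  by (simp add: power2_norm_eq_inner inner_add_left inner_add_right inner_commute)

lemma nsq_diff: "(norm (x - y :: 'a::real_inner))\<^sup>2 = (norm x)\<^sup>2 + (norm y)\<^sup>2 - 2 * inner x y"
  by (simp add: power2_norm_eq_inner inner_diff_left inner_diff_right inner_commute)

lemma core:
  fixes a b c d :: "'a::real_inner"
  assumes "norm a \<le> 1" "norm b \<le> 1" "norm c \<le> 1" "norm d \<le> 1"
  shows "(norm (a + b))\<^sup>2 + (norm (b + c))\<^sup>2 + (norm (c + d))\<^sup>2 + (norm (d - a))\<^sup>2 \<le> 8 + 4 * sqrt 2"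
proof -
  define s where "s = sqrt (2::real)"
  have s2: "s * s = 2" unfolding s_def by simp
  have s0: "s \<ge> 0" unfolding s_def by simp
  define S where "S = (norm a)\<^sup>2 + (norm b)\<^sup>2 + (norm c)\<^sup>2 + (norm d)\<^sup>2"
  define B where "B = inner a b + inner b c + inner c d - inner d a"
  have e1: "(norm (a - s *\<^sub>R b + c))\<^sup>2 = (norm a)\<^sup>2 + s * s * (norm b)\<^sup>2 + (norm c)\<^sup>2 - 2 * s * inner a b - 2 * s * inner b c + 2*inner a c"
    by (simp add: power2_norm_eq_inner inner_add_left inner_add_right inner_diff_left inner_diff_right inner_commute algebra_simps)
  have e2: "(norm (c - s *\<^sub>R d - a))\<^sup>2 = (norm a)\<^sup>2 + s * s * (norm d)\<^sup>2 + (norm c)\<^sup>2 - 2 * s * inner c d + 2 * s * inner d a - 2*inner a c"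
    by (simp add: power2_norm_eq_inner inner_add_left inner_add_right inner_diff_left inner_diff_right inner_commute algebra_simps)
  have "0 \<le> (norm (a - s *\<^sub>R b + c))\<^sup>2 + (norm (c - s *\<^sub>R d - a))\<^sup>2" by simp
  hence k: "s * B \<le> S" unfolding e1 e2 s2 S_def B_def by (simp add: algebra_simps)
  have "s * (s * B) \<le> s * S" using k s0 by (simp add: mult_left_mono)
  hence k2: "2 * B \<le> s * S" using s2 by (simp add: mult.assoc[symmetric])
  have S4: "S \<le> 4" unfolding S_def
    using power_le_one[OF norm_ge_zero assms(1), of 2] power_le_one[OF norm_ge_zero assms(2), of 2]
      power_le_one[OF norm_ge_zero assms(3), of 2] power_le_one[OF norm_ge_zero assms(4), of 2] by linarith
  have "s * S \<le> s * 4" using S4 s0 by (simp add: mult_left_mono)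
  moreover have "(norm (a + b))\<^sup>2 + (norm (b + c))\<^sup>2 + (norm (c + d))\<^sup>2 + (norm (d - a))\<^sup>2 = 2 * S + 2 * B"
    unfolding nsq_add nsq_diff S_def B_def by (simp add: inner_commute)
  ultimately show ?thesis using k2 S4 unfolding s_def by linarith
qed

theorem corollaryE5:
  fixes \<phi>0 \<phi>1 \<phi>2 \<phi>3 \<phi>4 :: "'a :: {real_inner, complete_space}"
    and \<epsilon> :: real
  assumes "norm \<phi>0 \<le> 1" "norm \<phi>1 \<le> 1" "norm \<phi>2 \<le> 1" "norm \<phi>3 \<le> 1" "norm \<phi>4 \<le> 1"
    and "\<epsilon> \<ge> 0"
    and "\<bar>norm \<phi>0 - 1\<bar> \<le> \<epsilon>" "\<bar>norm \<phi>4 - 1\<bar> \<le> \<epsilon>"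
    and "norm (\<phi>0 + \<phi>4) \<le> \<epsilon>"
  shows "(norm (\<phi>0 + \<phi>1))\<^sup>2 + (norm (\<phi>1 + \<phi>2))\<^sup>2 + (norm (\<phi>2 + \<phi>3))\<^sup>2
           + (norm (\<phi>3 + \<phi>4))\<^sup>2 \<le> 16 * (cos (pi / 8))\<^sup>2 + 6 * \<epsilon>"
proof -
  have "cos (2 * (pi/8)) = 2 * (cos (pi/8))\<^sup>2 - 1" by (rule cos_double_cos)
  moreover have "2 * (pi/8) = pi/4" by simp
  ultimately have c: "16 * (cos (pi / 8))\<^sup>2 = 8 + 4 * sqrt 2" using cos_45 by simp
  have C: "(norm (\<phi>0 + \<phi>1))\<^sup>2 + (norm (\<phi>1 + \<phi>2))\<^sup>2 + (norm (\<phi>2 + \<phi>3))\<^sup>2 + (norm (\<phi>3 - \<phi>0))\<^sup>2 \<le> 8 + 4 * sqrt 2"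
    using core assms by blast
  have t: "norm (\<phi>3 + \<phi>4) \<le> norm (\<phi>3 - \<phi>0) + norm (\<phi>0 + \<phi>4)"
    using norm_triangle_ineq[of "\<phi>3 - \<phi>0" "\<phi>0 + \<phi>4"] by simp
  have d2: "norm (\<phi>3 - \<phi>0) \<le> 2" using norm_triangle_ineq4[of \<phi>3 \<phi>0] assms by linarith
  have b16: "\<And>x y :: 'a. norm x \<le> 1 \<Longrightarrow> norm y \<le> 1 \<Longrightarrow> (norm (x + y))\<^sup>2 \<le> 4"
  proof -
    fix x y :: 'a assume "norm x \<le> 1" "norm y \<le> 1"
    hence "norm (x+y) \<le> 2" using norm_triangle_ineq[of x y] by linarith
    thus "(norm (x + y))\<^sup>2 \<le> 4" using power_mono[OF _ norm_ge_zero, of "x+y" 2 2] by simp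
  qed
  show ?thesis
  proof (cases "\<epsilon> \<ge> 2")
    case True
    have "(norm (\<phi>0 + \<phi>1))\<^sup>2 + (norm (\<phi>1 + \<phi>2))\<^sup>2 + (norm (\<phi>2 + \<phi>3))\<^sup>2 + (norm (\<phi>3 + \<phi>4))\<^sup>2 \<le> 16"
      using b16[OF assms(1) assms(2)] b16[OF assms(2) assms(3)] b16[OF assms(3) assms(4)]
        b16[OF assms(4) assms(5)] by linarith
    moreover have "sqrt 2 \<ge> 0" by simp
    ultimately show ?thesis using c True by linarith
  next
    case False
    define u where "u = norm (\<phi>3 - \<phi>0)"
    have u0: "0 \<le> u" "u \<le> 2" using d2 unfolding u_def by auto
    have "norm (\<phi>3 + \<phi>4) \<le> u + \<epsilon>" using t assms unfolding u_def by linarith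
    hence "(norm (\<phi>3 + \<phi>4))\<^sup>2 \<le> (u + \<epsilon>)\<^sup>2" by (simp add: power_mono)
    also have "\<dots> = u\<^sup>2 + 2*u*\<epsilon> + \<epsilon>*\<epsilon>" by (simp add: power2_eq_square algebra_simps)
    also have "\<dots> \<le> u\<^sup>2 + 6*\<epsilon>"
    proof -
      have "2*u*\<epsilon> \<le> 4*\<epsilon>" using u0 assms(6) by (simp add: mult_right_mono)
      moreover have "\<epsilon>*\<epsilon> \<le> 2*\<epsilon>" using False assms(6) by (simp add: mult_right_mono)
      ultimately show ?thesis by linarith
    qed
    finally show ?thesis using C c unfolding u_def by linarith
  qed
qed

end
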